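(* Let $(X,d)$ be a compact metric space, $\omega:\Lambda\times X\to X$ an $\eta$-expansive IFS, and $\sigma=(\lambda_1,\lambda_2,\dots)\in\Lambda^{\mathbb N}$. Then for every $\mu>0$ there exists $N>0$ such that if $x,y\in X$ satisfy $d(\omega_{\sigma_n}(x),\omega_{\sigma_n}(y))\le\eta$ for all $n\le N$, then $d(x,y)<\mu$.
   Context: An IFS is given by a compact metric space $\Lambda$ and a continuous map $\omega:\Lambda\times X\to X$; $\omega_\lambda=\omega(\lambda,\cdot)$. For $\sigma=(\lambda_1,\lambda_2,\dots)$, $\omega_{\sigma_0}=\mathrm{id}$, $\omega_{\sigma_k}=\omega_{\lambda_k}\circ\cdots\circ\omega_{\lambda_1}$. $\eta$-expansive: for every $\sigma\in\Lambda^{\mathbb N}$, if $x,y\in X$ satisfy $d(\omega_{\sigma_n}(x),\omega_{\sigma_n}(y))\le\eta$ for all $n\in\mathbb N$, then $x=y$. *)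

theory Defs
  imports "HOL-Analysis.Analysis"
begin

definition IFS :: "'l::metric_space set \<Rightarrow> 'a::metric_space set \<Rightarrow> ('l \<Rightarrow> 'a \<Rightarrow> 'a) \<Rightarrow> bool" where
  "IFS Lam X w \<longleftrightarrow> compact Lam \<and> compact X \<and>
     continuous_on (Lam \<times> X) (\<lambda>(l, x). w l x) \<and> (\<forall>l\<in>Lam. \<forall>x\<in>X. w l x \<in> X)"

text \<open>Iterated composition along sigma = (lambda_1, lambda_2, ...), encoded as
  sig 0 = lambda_1, sig 1 = lambda_2, ...:
  comp w sig 0 = id, comp w sig (Suc n) = w lambda_(n+1) o comp w sig n.\<close>
fun comp_seq :: "('l \<Rightarrow> 'a \<Rightarrow> 'a) \<Rightarrow> (nat \<Rightarrow> 'l) \<Rightarrow> nat \<Rightarrow> 'a \<Rightarrow> 'a" where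
  "comp_seq w sig 0 = id"
| "comp_seq w sig (Suc n) = w (sig n) \<circ> comp_seq w sig n"

definition expansive_IFS :: "'l::metric_space set \<Rightarrow> 'a::metric_space set \<Rightarrow> ('l \<Rightarrow> 'a \<Rightarrow> 'a) \<Rightarrow> real \<Rightarrow> bool" where
  "expansive_IFS Lam X w eta \<longleftrightarrow>
     (\<forall>sig. (\<forall>i. sig i \<in> Lam) \<longrightarrow>
        (\<forall>x\<in>X. \<forall>y\<in>X. (\<forall>n. dist (comp_seq w sig n x) (comp_seq w sig n y) \<le> eta) \<longrightarrow> x = y))"

end

theory Submission
  imports Defs
begin

lemma comp_in:
  assumes "IFS Lam X w" "\<forall>i. sig i \<in> Lam" "x \<in> X"
  shows "comp_seq w sig n x \<in> X"
  using assms by (induction n) (auto simp: IFS_def)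

lemma comp_cont:
  assumes "IFS Lam X w" "\<forall>i. sig i \<in> Lam"
  shows "continuous_on X (comp_seq w sig n)"
proof (induction n)
  case 0
  then show ?case by (simp add: continuous_on_id)
next
  case (Suc n)
  have c: "continuous_on (Lam \<times> X) (\<lambda>(l, x). w l x)" using assms by (simp add: IFS_def)
  have "continuous_on X (\<lambda>x. (sig n, x))" by (intro continuous_intros)
  moreover have "(\<lambda>x. (sig n, x)) ` X \<subseteq> Lam \<times> X" using assms by auto
  ultimately have "continuous_on X ((\<lambda>(l, x). w l x) \<circ> (\<lambda>x. (sig n, x)))"
    using continuous_on_compose continuous_on_subset c by blast
  hence wc: "continuous_on X (w (sig n))" by (simp add: o_def)
  have "comp_seq w sig n ` X \<subseteq> X" using comp_in[OF assms] by auto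
  then have "continuous_on X (w (sig n) \<circ> comp_seq w sig n)"
    using continuous_on_compose Suc continuous_on_subset wc by blast
  then show ?case by simp
qed

theorem mainTheorem10:
  fixes Lam :: "'l::metric_space set" and X :: "'a::metric_space set"
    and w :: "'l \<Rightarrow> 'a \<Rightarrow> 'a" and eta :: real and sig :: "nat \<Rightarrow> 'l"
  assumes "IFS Lam X w"
    and "expansive_IFS Lam X w eta"
    and "\<forall>i. sig i \<in> Lam"
  shows "\<forall>\<mu>>0. \<exists>N>0. \<forall>x\<in>X. \<forall>y\<in>X.
           (\<forall>n\<le>N. dist (comp_seq w sig n x) (comp_seq w sig n y) \<le> eta) \<longrightarrow> dist x y < \<mu>"
proof (rule ccontr)
  assume "\<not> ?thesis"
  then obtain \<mu> :: real where mu: "\<mu> > 0" and H: "\<forall>N>0. \<exists>x\<in>X. \<exists>y\<in>X.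
       (\<forall>n\<le>N. dist (comp_seq w sig n x) (comp_seq w sig n y) \<le> eta) \<and> \<not> dist x y < \<mu>"
    by (auto simp del: not_less) (metis neq0_conv)
  have "\<forall>N. \<exists>p. fst p \<in> X \<and> snd p \<in> X \<and> (\<forall>n\<le>Suc N. dist (comp_seq w sig n (fst p)) (comp_seq w sig n (snd p)) \<le> eta) \<and> \<mu> \<le> dist (fst p) (snd p)"
  proof
    fix N
    obtain x y where "x \<in> X" "y \<in> X" "\<forall>n\<le>Suc N. dist (comp_seq w sig n x) (comp_seq w sig n y) \<le> eta" "\<not> dist x y < \<mu>"
      using H[rule_format, of "Suc N"] by auto
    then show "\<exists>p. fst p \<in> X \<and> snd p \<in> X \<and> (\<forall>n\<le>Suc N. dist (comp_seq w sig n (fst p)) (comp_seq w sig n (snd p)) \<le> eta) \<and> \<mu> \<le> dist (fst p) (snd p)"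
      by (intro exI[of _ "(x,y)"]) auto
  qed
  then obtain f where f: "\<And>N. fst (f N) \<in> X" "\<And>N. snd (f N) \<in> X"
    "\<And>N n. n \<le> Suc N \<Longrightarrow> dist (comp_seq w sig n (fst (f N))) (comp_seq w sig n (snd (f N))) \<le> eta"
    "\<And>N. \<mu> \<le> dist (fst (f N)) (snd (f N))"
    by metis
  have cX: "compact X" using assms(1) by (simp add: IFS_def)
  have "compact (X \<times> X)" using cX by (simp add: compact_Times)
  moreover have "\<forall>n. f n \<in> X \<times> X" using f by (simp add: mem_Times_iff)
  ultimately obtain l r where l: "l \<in> X \<times> X" and r: "strict_mono r" and lim: "(f \<circ> r) \<longlonglongrightarrow> l"
    by (rule seq_compactE[OF compact_imp_seq_compact])
  define x where "x = fst l"
  define y where "y = snd l"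
  have xX: "x \<in> X" and yX: "y \<in> X" using l by (auto simp: x_def y_def mem_Times_iff)
  have lx: "(\<lambda>k. fst (f (r k))) \<longlonglongrightarrow> x" unfolding x_def using tendsto_fst[OF lim] by (simp add: o_def)
  have ly: "(\<lambda>k. snd (f (r k))) \<longlonglongrightarrow> y" unfolding y_def using tendsto_snd[OF lim] by (simp add: o_def)
  have "\<mu> \<le> dist x y"
    by (rule LIMSEQ_le_const[OF tendsto_dist[OF lx ly]]) (use f(4) in auto)
  hence "x \<noteq> y" using mu by auto
  moreover have "\<forall>n. dist (comp_seq w sig n x) (comp_seq w sig n y) \<le> eta"
  proof
    fix n
    have cc: "continuous_on X (comp_seq w sig n)" using comp_cont[OF assms(1,3)] .
    have a: "(\<lambda>k. comp_seq w sig n (fst (f (r k)))) \<longlonglongrightarrow> comp_seq w sig n x"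
      by (rule continuous_on_tendsto_compose[OF cc lx xX]) (use f in auto)
    have b: "(\<lambda>k. comp_seq w sig n (snd (f (r k)))) \<longlonglongrightarrow> comp_seq w sig n y"
      by (rule continuous_on_tendsto_compose[OF cc ly yX]) (use f in auto)
    show "dist (comp_seq w sig n x) (comp_seq w sig n y) \<le> eta"
    proof (rule LIMSEQ_le_const2[OF tendsto_dist[OF a b]], intro exI allI impI)
      fix k assume "n \<le> k"
      hence "n \<le> Suc (r k)" using seq_suble[OF r, of k] by linarith
      then show "dist (comp_seq w sig n (fst (f (r k)))) (comp_seq w sig n (snd (f (r k)))) \<le> eta"
        using f(3) by blast
    qed
  qed
  ultimately show False using assms(2,3) xX yX unfolding expansive_IFS_def by metis
qed

end
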